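(* The problem ExistsNecJR under the Lottery model — decide whether there exists a committee $W\subseteq C$ with $|W|=k$ that satisfies JR with respect to every plausible approval profile — is solvable in polynomial time when every approval set to which any voter assigns positive probability contains exactly one candidate.
   Context: An ABC instance consists of voters $V=[n]$, candidates $C=[m]$, an approval profile $A=(A_1,\dots,A_n)$ with $A_i\subseteq C$, and a positive integer $k$. A committee is a set $W\subseteq C$ with $|W|=k$. $W$ satisfies justified representation (JR) with respect to $A$ if for every $V'\subseteq V$ with $|V'|\ge \frac{n}{k}$ and $\bigcap_{i\in V'}A_i\neq\emptyset$, there is $i\in V'$ with $A_i\cap W\neq\emptyset$. In the Lottery model, each voter $i$ is given an explicit probability distribution $\{(\lambda_r,S_r)\}_{r\in[s_i]}$ over approval sets $S_r\subseteq C$ with $\lambda_r>0$, $\sum_r\lambda_r=1$; voters' approval sets are drawn independently. A plausible approval profile is an approval profile with positive probability. *)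

theory Defs
  imports Complex_Main 
begin

text \<open>Voters are 0..<n, candidates are 0..<m. An approval profile is a function
  from voters to sets of candidates (only voters below n matter).\<close>

definition JR :: "nat \<Rightarrow> nat \<Rightarrow> (nat \<Rightarrow> nat set) \<Rightarrow> nat set \<Rightarrow> bool" where
  "JR n k A W \<longleftrightarrow>
     (\<forall>V' \<subseteq> {0..<n}. real (card V') \<ge> real n / real k \<and> (\<Inter>i\<in>V'. A i) \<noteq> {}
         \<longrightarrow> (\<exists>i\<in>V'. A i \<inter> W \<noteq> {}))"

text \<open>A lottery instance: a list L with one entry per voter (so n = length L);
  entry i is the explicit distribution of voter i, a list of pairs
  (probability, approval set given as a list of candidates).\<close>

type_synonym lottery = "(real \<times> nat list) list"

definition valid_lottery_instance :: "nat \<Rightarrow> nat \<Rightarrow> lottery list \<Rightarrow> bool" where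
  "valid_lottery_instance m k L \<longleftrightarrow> k \<ge> 1 \<and> length L \<ge> 1 \<and>
     (\<forall>l\<in>set L. (\<forall>(p, S)\<in>set l. p > 0 \<and> set S \<subseteq> {0..<m}) \<and> (\<Sum>(p, S)\<leftarrow>l. p) = 1)"

text \<open>A plausible approval profile: each voter's approval set has positive
  probability under her lottery (voters draw independently).\<close>

definition plausible :: "lottery list \<Rightarrow> (nat \<Rightarrow> nat set) \<Rightarrow> bool" where
  "plausible L A \<longleftrightarrow>
     (\<forall>i<length L. (\<Sum>(p, S)\<leftarrow>L ! i. if set S = A i then p else 0) > 0)"

definition ExistsNecJR :: "nat \<Rightarrow> nat \<Rightarrow> lottery list \<Rightarrow> bool" where
  "ExistsNecJR m k L \<longleftrightarrow>
     (\<exists>W \<subseteq> {0..<m}. card W = k \<and>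
        (\<forall>A. plausible L A \<longrightarrow> JR (length L) k A W))"

definition singleton_lotteries :: "lottery list \<Rightarrow> bool" where
  "singleton_lotteries L \<longleftrightarrow>
     (\<forall>l\<in>set L. \<forall>(p, S)\<in>set l. p > 0 \<longrightarrow> card (set S) = 1)"

definition input_size :: "nat \<Rightarrow> nat \<Rightarrow> lottery list \<Rightarrow> nat" where
  "input_size m k L = m + length L +
     (\<Sum>l\<leftarrow>L. 1 + (\<Sum>(p, S)\<leftarrow>l. 1 + length S))"

fun mem :: "nat \<Rightarrow> nat list \<Rightarrow> bool" where
  "mem c [] = False"
| "mem c (x # xs) = (if x = c then True else mem c xs)"

fun in_support :: "nat \<Rightarrow> lottery \<Rightarrow> bool" where
  "in_support c [] = False"
| "in_support c ((p, S) # l) = (if mem c S then True else in_support c l)"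

fun count_supp :: "nat \<Rightarrow> lottery list \<Rightarrow> nat" where
  "count_supp c [] = 0"
| "count_supp c (l # L) = (if in_support c l then Suc (count_supp c L) else count_supp c L)"

fun heavy_count :: "nat \<Rightarrow> nat \<Rightarrow> nat \<Rightarrow> lottery list \<Rightarrow> nat" where
  "heavy_count 0 k n L = 0"
| "heavy_count (Suc c) k n L =
     (if n \<le> k * count_supp c L then Suc (heavy_count c k n L) else heavy_count c k n L)"

fun len :: "'a list \<Rightarrow> nat" where
  "len [] = 0"
| "len (x # xs) = Suc (len xs)"

fun decide_alg :: "nat \<Rightarrow> nat \<Rightarrow> lottery list \<Rightarrow> bool" where
  "decide_alg m k L = (k \<le> m \<and> heavy_count m k (len L) L \<le> k)"

text \<open>Running-time functions (unit cost model: one step per function call,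
  comparison and arithmetic operation), written out by hand in the style of
  the time functions of HOL-Library.Time_Commands: each T function mirrors
  the recursion of the corresponding algorithm and counts one step per call
  plus the cost of the called subroutines.\<close>

fun T_mem :: "nat \<Rightarrow> nat list \<Rightarrow> nat" where
  "T_mem c [] = 1"
| "T_mem c (x # xs) = 1 + (if x = c then 0 else T_mem c xs)"

fun T_in_support :: "nat \<Rightarrow> lottery \<Rightarrow> nat" where
  "T_in_support c [] = 1"
| "T_in_support c ((p, S) # l) = 1 + T_mem c S + (if mem c S then 0 else T_in_support c l)"

fun T_count_supp :: "nat \<Rightarrow> lottery list \<Rightarrow> nat" where
  "T_count_supp c [] = 1"
| "T_count_supp c (l # L) = 1 + T_in_support c l + T_count_supp c L"

fun T_heavy_count :: "nat \<Rightarrow> nat \<Rightarrow> nat \<Rightarrow> lottery list \<Rightarrow> nat" where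
  "T_heavy_count 0 k n L = 1"
| "T_heavy_count (Suc c) k n L = 1 + T_count_supp c L + T_heavy_count c k n L"

fun T_len :: "'a list \<Rightarrow> nat" where
  "T_len [] = 1"
| "T_len (x # xs) = 1 + T_len xs"

fun T_decide_alg :: "nat \<Rightarrow> nat \<Rightarrow> lottery list \<Rightarrow> nat" where
  "T_decide_alg m k L = 1 + T_len L + T_heavy_count m k (len L) L"

end

theory Submission
  imports Defs
begin

lemma mem_iff: "mem c S \<longleftrightarrow> c \<in> set S"
  by (induct S) auto

lemma in_support_iff: "in_support c l \<longleftrightarrow> (\<exists>(p, S)\<in>set l. c \<in> set S)"
  by (induct l) (auto simp: mem_iff)

lemma count_supp_filter: "count_supp c L = length (filter (in_support c) L)"
  by (induct L) auto

lemma count_supp_card: "count_supp c L = card {i. i < length L \<and> in_support c (L ! i)}"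
  by (simp add: count_supp_filter length_filter_conv_card)

lemma heavy_count_card: "heavy_count m k n L = card {c. c < m \<and> n \<le> k * count_supp c L}"
proof (induct m)
  case 0 then show ?case by simp
next
  case (Suc m)
  have eq: "{c. c < Suc m \<and> n \<le> k * count_supp c L} =
     (if n \<le> k * count_supp m L then insert m {c. c < m \<and> n \<le> k * count_supp c L}
      else {c. c < m \<and> n \<le> k * count_supp c L})"
    by (auto simp: less_Suc_eq)
  show ?case using Suc by (simp add: eq)
qed

lemma len_eq: "len xs = length xs"
  by (induct xs) auto

lemma T_mem_le: "T_mem c S \<le> length S + 1"
  by (induct S) auto

lemma T_in_support_le: "T_in_support c l \<le> 1 + (\<Sum>(p, S)\<leftarrow>l. 2 + length S)"
proof (induct l)
  case Nil then show ?case by simp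
next
  case (Cons a l)
  obtain p S where a: "a = (p, S)" by force
  show ?case using Cons T_mem_le[of c S] by (simp add: a)
qed

lemma T_count_supp_le: "T_count_supp c L \<le> 1 + (\<Sum>l\<leftarrow>L. 2 * (1 + (\<Sum>(p, S)\<leftarrow>l. 1 + length S)))"
proof (induct L)
  case Nil then show ?case by simp
next
  case (Cons l L)
  have "(\<Sum>(p, S)\<leftarrow>l. 2 + length S) \<le> 2 * (\<Sum>(p, S)\<leftarrow>l. 1 + length S)"
    by (induct l) auto
  then show ?case using Cons T_in_support_le[of c l] by simp
qed

lemma sum2: "(\<Sum>l\<leftarrow>L. 2 * (f l::nat)) = 2 * (\<Sum>l\<leftarrow>L. f l)"
  by (induct L) auto

lemma T_count_supp_le2: "T_count_supp c L \<le> 2 * (input_size m k L + 1)"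
  using T_count_supp_le[of c L] unfolding input_size_def sum2 by simp

lemma T_heavy_le: "T_heavy_count m' k n L \<le> 1 + m' * (3 * (input_size m k L + 1))"
proof (induct m')
  case 0 then show ?case by simp
next
  case (Suc m') then show ?case using T_count_supp_le2[of m' L m k] by simp
qed

lemma T_len_le: "T_len xs = length xs + 1"
  by (induct xs) auto

lemma time_bound: "T_decide_alg m k L \<le> 6 * (input_size m k L + 1) ^ 2"
proof -
  define s where "s = input_size m k L"
  have m: "m \<le> s" and l: "length L \<le> s" unfolding s_def input_size_def by auto
  have "T_decide_alg m k L \<le> 1 + (s + 1) + (1 + m * (3 * (s + 1)))"
    using T_heavy_le[of m k "len L" L m, folded s_def] T_len_le[of L] l by simp
  also have "\<dots> \<le> 1 + (s + 1) + (1 + s * (3 * (s + 1)))"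
    using m by simp
  also have "\<dots> \<le> 6 * (s + 1) ^ 2" by (simp add: power2_eq_square algebra_simps)
  finally show ?thesis by (simp add: s_def)
qed

lemma sum_pos_exists:
  fixes l :: lottery
  assumes "0 < (\<Sum>(p, S)\<leftarrow>l. if set S = X then p else (0::real))"
  shows "\<exists>(p, S)\<in>set l. set S = X"
  using assms
proof (induct l)
  case Nil then show ?case by simp
next
  case (Cons a l)
  obtain p S where a: "a = (p, S)" by force
  show ?case using Cons by (auto simp: a split: if_splits)
qed

lemma sum_pos_intro:
  fixes l :: lottery
  assumes "\<forall>(p, S)\<in>set l. p > 0" "(p, S) \<in> set l" "set S = X"
  shows "0 < (\<Sum>(p, S)\<leftarrow>l. if set S = X then p else (0::real))"
proof -
  define f where "f = (\<lambda>(p::real, S::nat list). if set S = X then p else (0::real))"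
  have "f (p, S) \<in> set (map f l)" using assms(2) by simp
  moreover have "\<And>x. x \<in> set (map f l) \<Longrightarrow> x \<ge> 0" using assms(1) by (auto simp: f_def)
  ultimately have "f (p, S) \<le> sum_list (map f l)" by (rule member_le_sum_list)
  moreover have "f (p, S) > 0" using assms by (auto simp: f_def)
  ultimately show ?thesis by (simp add: f_def)
qed

lemma real_div_le_iff:
  assumes "k \<ge> 1"
  shows "real n / real k \<le> real x \<longleftrightarrow> n \<le> k * x"
proof -
  have "real k > 0" using assms by simp
  then have "real n / real k \<le> real x \<longleftrightarrow> real n \<le> real x * real k"
    by (simp add: pos_divide_le_eq)
  also have "\<dots> \<longleftrightarrow> real n \<le> real (k * x)" by (simp add: mult.commute)
  also have "\<dots> \<longleftrightarrow> n \<le> k * x" by (rule of_nat_le_iff)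
  finally show ?thesis .
qed

lemma card1_mem: "card X = 1 \<Longrightarrow> c \<in> X \<Longrightarrow> X = {c}"
  by (auto simp: card_Suc_eq)

lemma necJR_iff:
  assumes v: "valid_lottery_instance m k L" and sl: "singleton_lotteries L"
  shows "(\<forall>A. plausible L A \<longrightarrow> JR (length L) k A W) \<longleftrightarrow>
         (\<forall>c. length L \<le> k * count_supp c L \<longrightarrow> c \<in> W)"
proof -
  let ?n = "length L"
  have k1: "k \<ge> 1" and n1: "?n \<ge> 1" using v by (auto simp: valid_lottery_instance_def)
  have pos: "\<forall>(p, S)\<in>set (L ! i). p > 0" if i: "i < ?n" for i
  proof -
    have "L ! i \<in> set L" using i by simp
    then show ?thesis using v unfolding valid_lottery_instance_def by blast
  qed
  have sum1: "(\<Sum>(p, S)\<leftarrow>L ! i. p) = 1" if i: "i < ?n" for i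
  proof -
    have "L ! i \<in> set L" using i by simp
    then show ?thesis using v unfolding valid_lottery_instance_def by blast
  qed
  have single: "\<And>i p S. i < ?n \<Longrightarrow> (p, S) \<in> set (L ! i) \<Longrightarrow> card (set S) = 1"
  proof -
    fix i p S assume i: "i < ?n" and pS: "(p, S) \<in> set (L ! i)"
    have "L ! i \<in> set L" using i by simp
    then have "\<forall>(p, S)\<in>set (L ! i). p > 0 \<longrightarrow> card (set S) = 1"
      using sl unfolding singleton_lotteries_def by blast
    moreover have "p > 0" using pos[OF i] pS by auto
    ultimately show "card (set S) = 1" using pS by auto
  qed
  define Supp where "Supp c = {i. i < ?n \<and> in_support c (L ! i)}" for c
  have cs: "count_supp c L = card (Supp c)" for c by (simp add: count_supp_card Supp_def)
  show ?thesis
  proof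
    assume H: "\<forall>A. plausible L A \<longrightarrow> JR ?n k A W"
    show "\<forall>c. ?n \<le> k * count_supp c L \<longrightarrow> c \<in> W"
    proof (intro allI impI)
      fix c assume hc: "?n \<le> k * count_supp c L"
      show "c \<in> W"
      proof (rule ccontr)
        assume cW: "c \<notin> W"
        define A where "A i = (if in_support c (L ! i) then {c} else set (snd (hd (L ! i))))" for i
        have pl: "plausible L A"
          unfolding plausible_def
        proof (intro allI impI)
          fix i assume i: "i < ?n"
          show "0 < (\<Sum>(p, S)\<leftarrow>L ! i. if set S = A i then p else 0)"
          proof (cases "in_support c (L ! i)")
            case True
            then obtain p S where pS: "(p, S) \<in> set (L ! i)" "c \<in> set S"
              by (auto simp: in_support_iff)
            have "card (set S) = 1" using single[OF i pS(1)] .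
            then have "set S = {c}" using pS(2) by (rule card1_mem)
            then show ?thesis using sum_pos_intro[OF pos[OF i] pS(1)] True by (simp add: A_def)
          next
            case False
            have ne: "L ! i \<noteq> []" using sum1[OF i] by auto
            obtain p S where hd: "hd (L ! i) = (p, S)" by force
            have "(p, S) \<in> set (L ! i)" using ne hd by (metis list.set_sel(1))
            then show ?thesis using sum_pos_intro[OF pos[OF i]] False hd by (simp add: A_def)
          qed
        qed
        have JR: "JR ?n k A W" using H pl by blast
        have "Supp c \<subseteq> {0..<?n}" by (auto simp: Supp_def)
        moreover have "real ?n / real k \<le> real (card (Supp c))"
          using hc cs real_div_le_iff[OF k1] by simp
        moreover have "c \<in> (\<Inter>i\<in>Supp c. A i)" by (auto simp: Supp_def A_def)
        ultimately obtain i where "i \<in> Supp c" "A i \<inter> W \<noteq> {}"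
          using JR unfolding JR_def by blast
        then show False using cW by (auto simp: Supp_def A_def)
      qed
    qed
  next
    assume H: "\<forall>c. ?n \<le> k * count_supp c L \<longrightarrow> c \<in> W"
    show "\<forall>A. plausible L A \<longrightarrow> JR ?n k A W"
    proof (intro allI impI)
      fix A assume pl: "plausible L A"
      have Ai: "\<exists>(p, S)\<in>set (L ! i). set S = A i" if i: "i < ?n" for i
        using pl i unfolding plausible_def by (intro sum_pos_exists) blast
      show "JR ?n k A W"
        unfolding JR_def
      proof (intro allI impI)
        fix V' assume V': "V' \<subseteq> {0..<?n}" "real ?n / real k \<le> real (card V') \<and> (\<Inter>i\<in>V'. A i) \<noteq> {}"
        then obtain c where c: "c \<in> (\<Inter>i\<in>V'. A i)" by blast
        have Ac: "A i = {c} \<and> in_support c (L ! i)" if iV: "i \<in> V'" for i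
        proof -
          have i: "i < ?n" using V' iV by auto
          obtain p S where pS: "(p, S) \<in> set (L ! i)" "set S = A i" using Ai[OF i] by blast
          have "card (set S) = 1" using single[OF i pS(1)] .
          moreover have "c \<in> set S" using c iV pS(2) by auto
          ultimately have "set S = {c}" by (rule card1_mem)
          then show ?thesis using pS by (auto simp: in_support_iff)
        qed
        have sub: "V' \<subseteq> Supp c" using V' Ac by (auto simp: Supp_def)
        have fin: "finite (Supp c)" by (simp add: Supp_def)
        have "card V' \<le> card (Supp c)" using card_mono[OF fin sub] .
        then have "real ?n / real k \<le> real (card (Supp c))" using V' by linarith
        then have "?n \<le> k * count_supp c L" using cs real_div_le_iff[OF k1] by simp
        then have cW: "c \<in> W" using H by blast
        have "V' \<noteq> {}"
        proof
          assume "V' = {}"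
          then have "real ?n / real k \<le> 0" using V' by simp
          moreover have "real ?n / real k > 0" using n1 k1 by (intro divide_pos_pos) auto
          ultimately show False by simp
        qed
        then obtain i where "i \<in> V'" by blast
        then show "\<exists>i\<in>V'. A i \<inter> W \<noteq> {}" using Ac cW by blast
      qed
    qed
  qed
qed

lemma correct:
  assumes v: "valid_lottery_instance m k L" and sl: "singleton_lotteries L"
  shows "decide_alg m k L = ExistsNecJR m k L"
proof -
  let ?n = "length L"
  define H where "H = {c. c < m \<and> ?n \<le> k * count_supp c L}"
  have k1: "k \<ge> 1" and n1: "?n \<ge> 1" using v by (auto simp: valid_lottery_instance_def)
  have Hc: "?n \<le> k * count_supp c L \<Longrightarrow> c < m" for c
  proof -
    assume "?n \<le> k * count_supp c L"
    then have "count_supp c L \<noteq> 0" using n1 by (cases "count_supp c L") auto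
    then obtain i where i: "i < ?n" "in_support c (L ! i)"
      unfolding count_supp_card by (metis (mono_tags, lifting) card.empty empty_Collect_eq)
    then obtain p S where pS: "(p, S) \<in> set (L ! i)" "c \<in> set S"
      by (auto simp: in_support_iff)
    have "L ! i \<in> set L" using i by simp
    then have "set S \<subseteq> {0..<m}" using v pS(1) unfolding valid_lottery_instance_def by blast
    then show "c < m" using pS(2) by auto
  qed
  have dec: "decide_alg m k L \<longleftrightarrow> k \<le> m \<and> card H \<le> k"
    by (simp add: len_eq heavy_count_card H_def)
  have ex: "ExistsNecJR m k L \<longleftrightarrow> (\<exists>W \<subseteq> {0..<m}. card W = k \<and> H \<subseteq> W)"
    unfolding ExistsNecJR_def necJR_iff[OF v sl] H_def using Hc by blast
  show ?thesis
  proof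
    assume "decide_alg m k L"
    then have km: "k \<le> m" and hk: "card H \<le> k" using dec by auto
    have Hsub: "H \<subseteq> {0..<m}" by (auto simp: H_def)
    have finH: "finite H" using Hsub finite_subset by blast
    have "k - card H \<le> card ({0..<m} - H)"
      using card_Diff_subset[OF finH Hsub] km card_mono[OF _ Hsub] by simp
    then obtain T where T: "T \<subseteq> {0..<m} - H" "card T = k - card H" "finite T"
      by (rule obtain_subset_with_card_n)
    have "card (H \<union> T) = card H + card T"
      using T finH by (intro card_Un_disjoint) auto
    then have "card (H \<union> T) = k" using T hk by simp
    moreover have "H \<union> T \<subseteq> {0..<m}" using T Hsub by auto
    ultimately show "ExistsNecJR m k L" using ex by blast
  next
    assume "ExistsNecJR m k L"
    then obtain W where W: "W \<subseteq> {0..<m}" "card W = k" "H \<subseteq> W" using ex by blast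
    have "k \<le> m" using card_mono[OF _ W(1)] W(2) by simp
    moreover have "card H \<le> k" using card_mono[OF _ W(3)] W(1,2) finite_subset by fastforce
    ultimately show "decide_alg m k L" using dec by simp
  qed
qed

theorem theorem6:
  shows "(\<forall>m k L. valid_lottery_instance m k L \<and> singleton_lotteries L \<longrightarrow>
            decide_alg m k L = ExistsNecJR m k L) \<and>
         (\<exists>c d::nat. \<forall>m k L. valid_lottery_instance m k L \<and> singleton_lotteries L \<longrightarrow>
            T_decide_alg m k L \<le> c * (input_size m k L + 1) ^ d)"
  using correct time_bound by blast

end
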